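(* Let $\mathcal{P}$ be a finite poset, let $\mathcal{A},\mathcal{B}$ be families of downsets of $\mathcal{P}$, and let $p\in\mathcal{P}$. Define $\mathcal{A}^p_1=\{A\setminus{\downarrow}p: A\in\mathcal{A}\}$, $\mathcal{B}^p_1=\{B\setminus{\downarrow}p: B\in\mathcal{B},\ p\in B\}$, $\mathcal{A}^p_2=\{A: A\in\mathcal{A},\ p\notin A\}$, $\mathcal{B}^p_2=\{B\setminus{\uparrow}p: B\in\mathcal{B}\}$. Then $\mathcal{A}$ and $\mathcal{B}$ are dual over $\mathcal{L}(\mathcal{P})$ if and only if $\mathcal{A}^p_1$ and $\mathcal{B}^p_1$ are dual over $\mathcal{L}(\mathcal{P}\setminus{\downarrow}p)$ and $\mathcal{A}^p_2$ and $\mathcal{B}^p_2$ are dual over $\mathcal{L}(\mathcal{P}\setminus{\uparrow}p)$.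
   Context: For a finite poset $\mathcal{P}$, $\mathcal{L}(\mathcal{P})$ denotes the distributive lattice of all downsets (order ideals) of $\mathcal{P}$ ordered by inclusion; subsets $\mathcal{P}\setminus{\downarrow}p$ and $\mathcal{P}\setminus{\uparrow}p$ carry the induced order. ${\downarrow}p=\{q\in\mathcal{P}:q\le p\}$ and ${\uparrow}p=\{q\in\mathcal{P}:q\ge p\}$ (both contain $p$). Two families $\mathcal{A},\mathcal{B}$ of downsets of $\mathcal{P}$ are dual over $\mathcal{L}(\mathcal{P})$ if $A\not\subseteq B$ for all $A\in\mathcal{A},B\in\mathcal{B}$ (property ( * )), and for every downset $X$ of $\mathcal{P}$ either $X\subseteq B$ for some $B\in\mathcal{B}$ or $A\subseteq X$ for some $A\in\mathcal{A}$. *)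

theory Defs
  imports Main
begin

text \<open>A finite poset is modelled as a finite carrier set Q of a type with a partial
  order; subsets carry the induced order.\<close>

definition is_downset :: "'a::order set \<Rightarrow> 'a set \<Rightarrow> bool" where
  "is_downset Q D \<longleftrightarrow> D \<subseteq> Q \<and> (\<forall>x\<in>D. \<forall>y\<in>Q. y \<le> x \<longrightarrow> y \<in> D)"

definition down :: "'a::order set \<Rightarrow> 'a \<Rightarrow> 'a set" where
  "down Q p = {q\<in>Q. q \<le> p}"

definition up :: "'a::order set \<Rightarrow> 'a \<Rightarrow> 'a set" where
  "up Q p = {q\<in>Q. p \<le> q}"

definition dual_over :: "'a::order set \<Rightarrow> 'a set set \<Rightarrow> 'a set set \<Rightarrow> bool" where
  "dual_over Q \<A> \<B> \<longleftrightarrow>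
     (\<forall>A\<in>\<A>. \<forall>B\<in>\<B>. \<not> A \<subseteq> B) \<and>
     (\<forall>X. is_downset Q X \<longrightarrow> (\<exists>B\<in>\<B>. X \<subseteq> B) \<or> (\<exists>A\<in>\<A>. A \<subseteq> X))"

end

theory Submission
  imports Defs
begin

lemma dn_sub: "is_downset P B \<Longrightarrow> p \<in> B \<Longrightarrow> down P p \<subseteq> B"
  unfolding is_downset_def down_def by blast

lemma up_disj: "is_downset P B \<Longrightarrow> p \<notin> B \<Longrightarrow> p \<in> P \<Longrightarrow> B \<inter> up P p = {}"
  unfolding is_downset_def up_def by blast

lemma ds1:
  assumes "is_downset (P - down P p) X" shows "is_downset P (X \<union> down P p)"
  unfolding is_downset_def
proof (intro conjI ballI impI)
  show "X \<union> down P p \<subseteq> P" using assms unfolding is_downset_def down_def by blast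
next
  fix x y assume x: "x \<in> X \<union> down P p" and y: "y \<in> P" "y \<le> x"
  show "y \<in> X \<union> down P p"
  proof (cases "x \<in> X")
    case True
    then show ?thesis using assms y unfolding is_downset_def by blast
  next
    case False
    then have "x \<le> p" using x unfolding down_def by blast
    then have "y \<le> p" using y(2) by (rule order_trans[rotated])
    then show ?thesis using y(1) unfolding down_def by blast
  qed
qed

lemma ds2:
  assumes "is_downset (P - up P p) X" shows "is_downset P X"
  unfolding is_downset_def
proof (intro conjI ballI impI)
  show "X \<subseteq> P" using assms unfolding is_downset_def by blast
next
  fix x y assume x: "x \<in> X" and y: "y \<in> P" "y \<le> x"
  have "y \<notin> up P p"
  proof
    assume "y \<in> up P p"
    then have "p \<le> y" unfolding up_def by blast
    then have "p \<le> x" using y(2) by (rule order_trans)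
    then have "x \<in> up P p" using x assms unfolding up_def is_downset_def by blast
    then show False using x assms unfolding is_downset_def by blast
  qed
  then show "y \<in> X" using assms x y unfolding is_downset_def by blast
qed
lemma ds3: "is_downset P X \<Longrightarrow> is_downset (P - down P p) (X - down P p)"
  unfolding is_downset_def down_def by auto

lemma ds4: "is_downset P X \<Longrightarrow> p \<notin> X \<Longrightarrow> p \<in> P \<Longrightarrow> is_downset (P - up P p) X"
  unfolding is_downset_def up_def by blast

theorem lemma3:
  fixes P :: "'a::order set" and \<A> \<B> :: "'a set set" and p :: 'a
  assumes "finite P"
    and "\<forall>A\<in>\<A>. is_downset P A"
    and "\<forall>B\<in>\<B>. is_downset P B"
    and "p \<in> P"
  shows "dual_over P \<A> \<B> \<longleftrightarrow>
           dual_over (P - down P p) ((\<lambda>A. A - down P p) ` \<A>)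
                     ((\<lambda>B. B - down P p) ` {B\<in>\<B>. p \<in> B}) \<and>
           dual_over (P - up P p) {A\<in>\<A>. p \<notin> A} ((\<lambda>B. B - up P p) ` \<B>)"
proof
  have pD: "p \<in> down P p" and pU: "p \<in> up P p" using assms(4) by (auto simp: down_def up_def)
  assume d: "dual_over P \<A> \<B>"
  have s: "\<And>A B. A \<in> \<A> \<Longrightarrow> B \<in> \<B> \<Longrightarrow> \<not> A \<subseteq> B" using d unfolding dual_over_def by blast
  have c: "\<And>X. is_downset P X \<Longrightarrow> (\<exists>B\<in>\<B>. X \<subseteq> B) \<or> (\<exists>A\<in>\<A>. A \<subseteq> X)"
    using d unfolding dual_over_def by blast
  have 1: "dual_over (P - down P p) ((\<lambda>A. A - down P p) ` \<A>)
                     ((\<lambda>B. B - down P p) ` {B\<in>\<B>. p \<in> B})"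
    unfolding dual_over_def
  proof (intro conjI ballI allI impI)
    fix A' B' assume "A' \<in> (\<lambda>A. A - down P p) ` \<A>" "B' \<in> (\<lambda>B. B - down P p) ` {B\<in>\<B>. p \<in> B}"
    then obtain A B where AB: "A \<in> \<A>" "B \<in> \<B>" "p \<in> B" "A' = A - down P p" "B' = B - down P p" by auto
    have "down P p \<subseteq> B" using dn_sub AB assms(3) by blast
    then show "\<not> A' \<subseteq> B'" using s[OF AB(1,2)] AB by blast
  next
    fix X assume X: "is_downset (P - down P p) X"
    then have XD: "X \<inter> down P p = {}" unfolding is_downset_def by blast
    from c[OF ds1[OF X]] show "(\<exists>B\<in>(\<lambda>B. B - down P p) ` {B\<in>\<B>. p \<in> B}. X \<subseteq> B) \<or>
          (\<exists>A\<in>(\<lambda>A. A - down P p) ` \<A>. A \<subseteq> X)"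
    proof
      assume "\<exists>B\<in>\<B>. X \<union> down P p \<subseteq> B"
      then obtain B where B: "B \<in> \<B>" "X \<union> down P p \<subseteq> B" by blast
      then have "B \<in> {B\<in>\<B>. p \<in> B}" using pD by blast
      then have "B - down P p \<in> (\<lambda>B. B - down P p) ` {B\<in>\<B>. p \<in> B}" by (rule imageI)
      moreover have "X \<subseteq> B - down P p" using B XD by blast
      ultimately show ?thesis by (intro disjI1 bexI)
    next
      assume "\<exists>A\<in>\<A>. A \<subseteq> X \<union> down P p"
      then obtain A where A: "A \<in> \<A>" "A \<subseteq> X \<union> down P p" by blast
      have "A - down P p \<in> (\<lambda>A. A - down P p) ` \<A>" using A(1) by (rule imageI)
      moreover have "A - down P p \<subseteq> X" using A by blast
      ultimately show ?thesis by (intro disjI2 bexI)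
    qed
  qed
  have 2: "dual_over (P - up P p) {A\<in>\<A>. p \<notin> A} ((\<lambda>B. B - up P p) ` \<B>)"
    unfolding dual_over_def
  proof (intro conjI ballI allI impI)
    fix A B' assume "A \<in> {A\<in>\<A>. p \<notin> A}" "B' \<in> (\<lambda>B. B - up P p) ` \<B>"
    then show "\<not> A \<subseteq> B'" using s by blast
  next
    fix X assume X: "is_downset (P - up P p) X"
    then have XU: "X \<inter> up P p = {}" unfolding is_downset_def by blast
    from c[OF ds2[OF X]] show "(\<exists>B\<in>(\<lambda>B. B - up P p) ` \<B>. X \<subseteq> B) \<or> (\<exists>A\<in>{A\<in>\<A>. p \<notin> A}. A \<subseteq> X)"
    proof
      assume "\<exists>B\<in>\<B>. X \<subseteq> B"
      then obtain B where B: "B \<in> \<B>" "X \<subseteq> B" by blast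
      have "B - up P p \<in> (\<lambda>B. B - up P p) ` \<B>" using B(1) by (rule imageI)
      moreover have "X \<subseteq> B - up P p" using B XU by blast
      ultimately show ?thesis by (intro disjI1 bexI)
    next
      assume "\<exists>A\<in>\<A>. A \<subseteq> X"
      then obtain A where A: "A \<in> \<A>" "A \<subseteq> X" by blast
      have "p \<notin> X" using XU pU by blast
      then have "A \<in> {A\<in>\<A>. p \<notin> A}" using A by blast
      then show ?thesis using A(2) by (intro disjI2 bexI)
    qed
  qed
  show "dual_over (P - down P p) ((\<lambda>A. A - down P p) ` \<A>)
                     ((\<lambda>B. B - down P p) ` {B\<in>\<B>. p \<in> B}) \<and>
           dual_over (P - up P p) {A\<in>\<A>. p \<notin> A} ((\<lambda>B. B - up P p) ` \<B>)" using 1 2 by blast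
next
  have pD: "p \<in> down P p" and pU: "p \<in> up P p" using assms(4) by (auto simp: down_def up_def)
  assume h: "dual_over (P - down P p) ((\<lambda>A. A - down P p) ` \<A>)
                     ((\<lambda>B. B - down P p) ` {B\<in>\<B>. p \<in> B}) \<and>
           dual_over (P - up P p) {A\<in>\<A>. p \<notin> A} ((\<lambda>B. B - up P p) ` \<B>)"
  have h1: "dual_over (P - down P p) ((\<lambda>A. A - down P p) ` \<A>)
                     ((\<lambda>B. B - down P p) ` {B\<in>\<B>. p \<in> B})" using h by (rule conjunct1)
  have h2: "dual_over (P - up P p) {A\<in>\<A>. p \<notin> A} ((\<lambda>B. B - up P p) ` \<B>)"
    using h by (rule conjunct2)
  have h1a: "\<forall>A'\<in>(\<lambda>A. A - down P p) ` \<A>. \<forall>B'\<in>(\<lambda>B. B - down P p) ` {B\<in>\<B>. p \<in> B}. \<not> A' \<subseteq> B'"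
    using h1 unfolding dual_over_def by (rule conjunct1)
  have h1c: "\<forall>X. is_downset (P - down P p) X \<longrightarrow> (\<exists>B'\<in>(\<lambda>B. B - down P p) ` {B\<in>\<B>. p \<in> B}. X \<subseteq> B') \<or> (\<exists>A'\<in>(\<lambda>A. A - down P p) ` \<A>. A' \<subseteq> X)"
    using h1 unfolding dual_over_def by (rule conjunct2)
  have h2a: "\<forall>A\<in>{A\<in>\<A>. p \<notin> A}. \<forall>B'\<in>(\<lambda>B. B - up P p) ` \<B>. \<not> A \<subseteq> B'"
    using h2 unfolding dual_over_def by (rule conjunct1)
  have h2c: "\<forall>X. is_downset (P - up P p) X \<longrightarrow> (\<exists>B'\<in>(\<lambda>B. B - up P p) ` \<B>. X \<subseteq> B') \<or> (\<exists>A\<in>{A\<in>\<A>. p \<notin> A}. A \<subseteq> X)"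
    using h2 unfolding dual_over_def by (rule conjunct2)
  have s1: "\<not> A - down P p \<subseteq> B - down P p" if "A \<in> \<A>" "B \<in> \<B>" "p \<in> B" for A B
  proof -
    have i1: "A - down P p \<in> (\<lambda>A. A - down P p) ` \<A>" using that(1) by (rule imageI)
    have "B \<in> {B\<in>\<B>. p \<in> B}" using that by blast
    then have i2: "B - down P p \<in> (\<lambda>B. B - down P p) ` {B\<in>\<B>. p \<in> B}" by (rule imageI)
    show ?thesis using bspec[OF bspec[OF h1a i1] i2] .
  qed
  have s2: "\<not> A \<subseteq> B - up P p" if "A \<in> \<A>" "p \<notin> A" "B \<in> \<B>" for A B
  proof -
    have i1: "A \<in> {A\<in>\<A>. p \<notin> A}" using that by blast
    have i2: "B - up P p \<in> (\<lambda>B. B - up P p) ` \<B>" using that(3) by (rule imageI)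
    show ?thesis using bspec[OF bspec[OF h2a i1] i2] .
  qed
  have c1: "(\<exists>B\<in>\<B>. p \<in> B \<and> X \<subseteq> B - down P p) \<or> (\<exists>A\<in>\<A>. A - down P p \<subseteq> X)"
    if "is_downset (P - down P p) X" for X
  proof -
    have "(\<exists>B'\<in>(\<lambda>B. B - down P p) ` {B\<in>\<B>. p \<in> B}. X \<subseteq> B') \<or> (\<exists>A'\<in>(\<lambda>A. A - down P p) ` \<A>. A' \<subseteq> X)"
      using h1c that by blast
    then show ?thesis
    proof
      assume "\<exists>B'\<in>(\<lambda>B. B - down P p) ` {B\<in>\<B>. p \<in> B}. X \<subseteq> B'"
      then have "\<exists>B\<in>{B\<in>\<B>. p \<in> B}. X \<subseteq> B - down P p" by (rule bex_imageD)
      then show ?thesis by blast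
    next
      assume "\<exists>A'\<in>(\<lambda>A. A - down P p) ` \<A>. A' \<subseteq> X"
      then have "\<exists>A\<in>\<A>. A - down P p \<subseteq> X" by (rule bex_imageD)
      then show ?thesis by blast
    qed
  qed
  have c2: "(\<exists>B\<in>\<B>. X \<subseteq> B - up P p) \<or> (\<exists>A\<in>\<A>. p \<notin> A \<and> A \<subseteq> X)"
    if "is_downset (P - up P p) X" for X
  proof -
    have "(\<exists>B'\<in>(\<lambda>B. B - up P p) ` \<B>. X \<subseteq> B') \<or> (\<exists>A\<in>{A\<in>\<A>. p \<notin> A}. A \<subseteq> X)"
      using h2c that by blast
    then show ?thesis
    proof
      assume "\<exists>B'\<in>(\<lambda>B. B - up P p) ` \<B>. X \<subseteq> B'"
      then have "\<exists>B\<in>\<B>. X \<subseteq> B - up P p" by (rule bex_imageD)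
      then show ?thesis by blast
    next
      assume "\<exists>A\<in>{A\<in>\<A>. p \<notin> A}. A \<subseteq> X"
      then show ?thesis by blast
    qed
  qed
  show "dual_over P \<A> \<B>"
    unfolding dual_over_def
  proof (intro conjI ballI allI impI)
    fix A B assume AB: "A \<in> \<A>" "B \<in> \<B>"
    show "\<not> A \<subseteq> B"
    proof (cases "p \<in> B")
      case True then show ?thesis using s1[OF AB True] by blast
    next
      case False
      have "B \<inter> up P p = {}" using up_disj[OF _ False assms(4)] AB assms(3) by blast
      then show ?thesis using s2[OF AB(1) _ AB(2)] False by blast
    qed
  next
    fix X assume X: "is_downset P X"
    show "(\<exists>B\<in>\<B>. X \<subseteq> B) \<or> (\<exists>A\<in>\<A>. A \<subseteq> X)"
    proof (cases "p \<in> X")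
      case True
      have XD: "down P p \<subseteq> X" using dn_sub X True by blast
      from c1[OF ds3[OF X]] show ?thesis
      proof
        assume "\<exists>B\<in>\<B>. p \<in> B \<and> X - down P p \<subseteq> B - down P p"
        then obtain B where "B \<in> \<B>" "p \<in> B" "X - down P p \<subseteq> B - down P p" by blast
        moreover have "down P p \<subseteq> B" using dn_sub assms(3) calculation by blast
        ultimately show ?thesis by blast
      next
        assume "\<exists>A\<in>\<A>. A - down P p \<subseteq> X - down P p"
        then show ?thesis using XD by blast
      qed
    next
      case False
      from c2[OF ds4[OF X False assms(4)]] show ?thesis by blast
    qed
  qed
qed

end
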